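(* Let $K,G,m_0,A_g,B_g,\bar f_c,\bar f_t>0$, $m_g'(p)=A_g e^{\frac{p-\bar f_t/3}{B_g\bar f_c}}$, and let $p^{tr}\in\mathbb R$, $\varrho^{tr}\ge0$. For each $\gamma\ge0$ consider the equations $$p_\gamma+\gamma K\frac{m_g'(p_\gamma)}{\bar f_c}-p^{tr}=0,\qquad \varrho_\gamma-\Big[\varrho^{tr}-\gamma2G\Big(\frac{3\varrho_\gamma}{\bar f_c^2}+\frac{m_0}{\sqrt6\bar f_c}\Big)\Big]^+=0.$$ Then the maps $\hat p_{tr}:\gamma\mapsto p_\gamma$ and $\hat\varrho_{tr}:\gamma\mapsto\varrho_\gamma$ are well defined on $\mathbb R_+$ (each equation has a unique real solution). Moreover, $\hat p_{tr}$ is smooth and decreasing on $\mathbb R_+$, $\hat\varrho_{tr}$ is decreasing on $\big[0,\frac{\sqrt6\bar f_c\varrho^{tr}}{2Gm_0}\big)$, and $$\hat\varrho_{tr}(\gamma)=\frac{1}{1+\gamma\frac{6G}{\bar f_c^2}}\Big(\varrho^{tr}-\gamma\frac{2Gm_0}{\sqrt6\bar f_c}\Big)^+\quad\forall\gamma\ge0.$$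
   Context: $\mathbb R_+=[0,\infty)$; $(x)^+=\max\{0,x\}$. *)

theory Defs
  imports "HOL-Analysis.Analysis"
begin

definition mg' :: "real \<Rightarrow> real \<Rightarrow> real \<Rightarrow> real \<Rightarrow> real \<Rightarrow> real" where
  "mg' Ag Bg fc ft p = Ag * exp ((p - ft / 3) / (Bg * fc))"

definition smooth_on :: "real set \<Rightarrow> (real \<Rightarrow> real) \<Rightarrow> bool" where
  "smooth_on S f \<longleftrightarrow> (\<exists>D :: nat \<Rightarrow> real \<Rightarrow> real. D 0 = f \<and>
      (\<forall>n. \<forall>x\<in>S. (D n has_real_derivative D (Suc n) x) (at x within S)))"

end

theory Submission imports Defs "HOL-Complex_Analysis.Complex_Analysis" begin

locale pp =
  fixes Ag \<beta> a c ptr :: real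
  assumes Ag: "0 < Ag" and bet: "0 < \<beta>" and cpos: "0 < c"
begin

definition "MM p = Ag * exp ((p - a) / \<beta>)"
definition "Gm p = (ptr - p) / (c * MM p)"
definition "gi y = (THE p. p < ptr + \<beta> \<and> Gm p = y)"
definition "Phi p = - (\<beta> * c * MM p) / (\<beta> + ptr - p)"

lemma MM_pos: "MM p > 0"
  unfolding MM_def using Ag by simp

lemma MM_deriv: "(MM has_real_derivative MM p / \<beta>) (at p)"
  unfolding MM_def using bet
  by (auto intro!: derivative_eq_intros simp: field_simps)

lemma Gm_deriv: "(Gm has_real_derivative -(\<beta> + ptr - p) / (\<beta> * c * MM p)) (at p)"
proof -
  have "((\<lambda>p. (ptr - p) / (c * MM p)) has_real_derivative
     ((-1) * (c * MM p) - (ptr - p) * (c * (MM p / \<beta>))) / (c * MM p)^2) (at p)"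
    using DERIV_divide[OF DERIV_diff[OF DERIV_const[of ptr] DERIV_ident] DERIV_cmult[OF MM_deriv, of c]]
      MM_pos[of p] cpos
    by (simp add: power2_eq_square)
  moreover have "((-1) * (c * MM p) - (ptr - p) * (c * (MM p / \<beta>))) / (c * MM p)^2
      = -(\<beta> + ptr - p) / (\<beta> * c * MM p)"
    using MM_pos[of p] cpos bet by (simp add: field_simps power2_eq_square)
  ultimately show ?thesis unfolding Gm_def[abs_def] by simp
qed

lemma Gm_cont: "isCont Gm p"
  using Gm_deriv DERIV_isCont by blast

lemma Gm_strict: "p < q \<Longrightarrow> q < ptr + \<beta> \<Longrightarrow> Gm q < Gm p"
  apply (rule DERIV_neg_imp_decreasing, assumption)
  subgoal for x
    apply (rule exI[of _ "-(\<beta> + ptr - x) / (\<beta> * c * MM x)"])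
    using Gm_deriv[of x] MM_pos[of x] bet cpos
    by (auto intro!: divide_neg_pos)
  done

lemma Gm_inj: "p < ptr + \<beta> \<Longrightarrow> q < ptr + \<beta> \<Longrightarrow> Gm p = Gm q \<Longrightarrow> p = q"
  using Gm_strict by (metis linorder_neqE_linordered_idom order_less_irrefl)

lemma Gm_surj: assumes "y > Gm (ptr + \<beta>/2)" shows "\<exists>p. p \<le> ptr + \<beta>/2 \<and> Gm p = y"
proof -
  define p0 where "p0 = min (a) (ptr - \<bar>y\<bar> * c * Ag)"
  have "MM p0 \<le> Ag" unfolding MM_def p0_def using Ag bet
    by (simp add: divide_nonpos_pos)
  have h: "ptr - p0 \<ge> \<bar>y\<bar> * c * Ag" unfolding p0_def by simp
  have "Gm p0 \<ge> y"
  proof -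
    have "\<bar>y\<bar> * c * MM p0 \<le> \<bar>y\<bar> * c * Ag"
      using \<open>MM p0 \<le> Ag\<close> cpos by (simp add: mult_left_mono)
    moreover have "y * (c * MM p0) \<le> \<bar>y\<bar> * (c * MM p0)"
      using MM_pos[of p0] cpos by (intro mult_right_mono) auto
    ultimately have "y * (c * MM p0) \<le> ptr - p0" using h by (simp add: mult.assoc)
    thus ?thesis unfolding Gm_def using MM_pos[of p0] cpos by (simp add: pos_le_divide_eq)
  qed
  have "\<bar>y\<bar> * c * Ag \<ge> 0" using Ag cpos by simp
  hence "p0 \<le> ptr + \<beta>/2" unfolding p0_def using bet by linarith
  from IVT2[of Gm "ptr + \<beta>/2" y p0] this \<open>Gm p0 \<ge> y\<close> assms Gm_cont
  show ?thesis by force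
qed

lemma gi_eq: "p < ptr + \<beta> \<Longrightarrow> Gm p = y \<Longrightarrow> gi y = p"
  unfolding gi_def by (rule the_equality) (auto intro: Gm_inj)

lemma gi: assumes "y > Gm (ptr + \<beta>/2)" shows "gi y < ptr + \<beta> \<and> Gm (gi y) = y"
proof -
  obtain p where "p \<le> ptr + \<beta>/2" "Gm p = y" using Gm_surj assms by blast
  moreover have "p < ptr + \<beta>" using calculation bet by simp
  ultimately show ?thesis using gi_eq by simp
qed

lemma gi_deriv: assumes "y > Gm (ptr + \<beta>/2)" shows "(gi has_real_derivative Phi (gi y)) (at y)"
proof -
  let ?p = "gi y"
  have p: "?p < ptr + \<beta>" "Gm ?p = y" using gi[OF assms] by auto
  have zb: "\<And>z. \<bar>z - ?p\<bar> \<le> (ptr + \<beta> - ?p)/2 \<Longrightarrow> z < ptr + \<beta>"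
  proof -
    fix z assume "\<bar>z - ?p\<bar> \<le> (ptr + \<beta> - ?p)/2"
    moreover have "z - ?p \<le> \<bar>z - ?p\<bar>" by simp
    ultimately have "z - ?p \<le> (ptr + \<beta> - ?p)/2" by linarith
    thus "z < ptr + \<beta>" using p(1) by (simp add: field_simps)
  qed
  have "isCont gi (Gm ?p)"
    apply (rule isCont_inverse_function[where f = Gm and g = gi and d = "(ptr + \<beta> - ?p)/2"])
    using p apply simp
     apply (rule gi_eq) using p zb by (auto simp: Gm_cont)
  hence cont: "isCont gi y" using p by simp
  have "(gi has_real_derivative inverse (-(\<beta> + ptr - ?p) / (\<beta> * c * MM ?p))) (at y)"
    apply (rule DERIV_inverse_function[where a = "Gm (ptr + \<beta>/2)" and b = "y + 1"])
         apply (rule Gm_deriv)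
    using p MM_pos[of ?p] bet cpos apply simp
    using assms apply simp apply simp
     apply (simp add: gi)
    by (rule cont)
  moreover have "inverse (-(\<beta> + ptr - ?p) / (\<beta> * c * MM ?p)) = Phi ?p"
  proof -
    have "\<beta> + ptr - ?p \<noteq> 0" using p(1) by simp
    thus ?thesis unfolding Phi_def using MM_pos[of ?p] bet cpos by (simp add: field_simps)
  qed
  ultimately show ?thesis by simp
qed

lemma Gm_half_neg: "Gm (ptr + \<beta>/2) < 0"
  unfolding Gm_def using MM_pos bet cpos by (simp add: divide_neg_pos)

lemma eq_iff: assumes "\<gamma> \<ge> 0"
  shows "p + \<gamma> * c * MM p - ptr = 0 \<longleftrightarrow> (p < ptr + \<beta> \<and> Gm p = \<gamma>)"
proof
  assume h: "p + \<gamma> * c * MM p - ptr = 0"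
  have "\<gamma> * c * MM p \<ge> 0" using assms cpos MM_pos[of p] by simp
  hence "p < ptr + \<beta>" using h bet by linarith
  moreover have "Gm p = \<gamma>" unfolding Gm_def using h MM_pos[of p] cpos
    by (simp add: field_simps)
  ultimately show "p < ptr + \<beta> \<and> Gm p = \<gamma>" by simp
next
  assume "p < ptr + \<beta> \<and> Gm p = \<gamma>"
  thus "p + \<gamma> * c * MM p - ptr = 0" unfolding Gm_def using MM_pos[of p] cpos
    by (auto simp: field_simps)
qed

definition Phc :: "complex \<Rightarrow> complex" where "Phc z = - (of_real (\<beta> * c * Ag)) * exp ((z - of_real a) / of_real \<beta>)
   / (of_real (\<beta> + ptr) - z)"

lemma Phc_hol: "Phc holomorphic_on {z. Re z < ptr + \<beta>}"
  unfolding Phc_def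
  by (intro holomorphic_intros) auto

lemma Phc_real: "Phc (of_real p) = of_real (Phi p)"
proof -
  have e: "exp ((of_real p - of_real a)/of_real \<beta>) = (of_real (exp ((p-a)/\<beta>)) :: complex)"
    by (metis exp_of_real of_real_diff of_real_divide)
  show ?thesis unfolding Phc_def Phi_def MM_def e by simp
qed

fun Psi :: "nat \<Rightarrow> complex \<Rightarrow> complex" where
  "Psi 0 = (\<lambda>z. z)"
| "Psi (Suc n) = (\<lambda>z. deriv (Psi n) z * Phc z)"

lemma Psi_hol: "Psi n holomorphic_on {z. Re z < ptr + \<beta>}"
proof (induction n)
  case 0 then show ?case by simp
next
  case (Suc n)
  have o: "open {z. Re z < ptr + \<beta>}" by (simp add: open_halfspace_Re_lt)
  show ?case using holomorphic_deriv[OF Suc o] Phc_hol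
    by (simp add: holomorphic_on_mult)
qed

end

lemma rho_sol:
  fixes g c1 c2 r \<rho> :: real
  assumes g: "g \<ge> 0" and c1: "c1 > 0" and c2: "c2 > 0"
  shows "\<rho> - max 0 (r - g*c1 - g*c2*\<rho>) = 0 \<longleftrightarrow> \<rho> = max 0 (r - g*c1) / (1 + g*c2)"
proof -
  have d: "1 + g*c2 > 0" using g c2 by (simp add: add_pos_nonneg)
  show ?thesis
  proof
    assume h: "\<rho> - max 0 (r - g*c1 - g*c2*\<rho>) = 0"
    show "\<rho> = max 0 (r - g*c1) / (1 + g*c2)"
    proof (cases "r - g*c1 - g*c2*\<rho> \<ge> 0")
      case True
      hence "\<rho> = r - g*c1 - g*c2*\<rho>" using h by simp
      hence e: "\<rho> * (1 + g*c2) = r - g*c1" by (simp add: algebra_simps)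
      have "\<rho> \<ge> 0" using h by (metis eq_iff_diff_eq_0 max.cobounded1)
      hence "r - g*c1 \<ge> 0" using e d by (metis mult_nonneg_nonneg less_imp_le)
      thus ?thesis using e d by (simp add: field_simps)
    next
      case False
      hence r0: "\<rho> = 0" using h by simp
      hence "r - g*c1 < 0" using False by simp
      thus ?thesis using r0 by simp
    qed
  next
    assume h: "\<rho> = max 0 (r - g*c1) / (1 + g*c2)"
    show "\<rho> - max 0 (r - g*c1 - g*c2*\<rho>) = 0"
    proof (cases "r - g*c1 \<ge> 0")
      case True
      hence "\<rho> = (r - g*c1) / (1 + g*c2)" using h by simp
      hence e: "\<rho> * (1 + g*c2) = r - g*c1" using d by (simp add: field_simps)
      have "\<rho> \<ge> 0" using h True d by simp
      moreover have "r - g*c1 - g*c2*\<rho> = \<rho>" using e by (simp add: algebra_simps)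
      ultimately show ?thesis by simp
    next
      case False
      hence "\<rho> = 0" using h by simp
      thus ?thesis using False by simp
    qed
  qed
qed

lemma rho_decr:
  fixes x y c1 c2 r :: real
  assumes "0 \<le> x" "x < y" "c1 > 0" "c2 > 0" "r - y * c1 > 0"
  shows "(r - y*c1) / (1 + y*c2) < (r - x*c1) / (1 + x*c2)"
proof -
  have dx: "1 + x*c2 > 0" "1 + y*c2 > 0" using assms by (simp_all add: add_pos_nonneg)
  have "(r - x*c1)*(1+y*c2) - (r - y*c1)*(1+x*c2) = (y-x)*(r*c2+c1)"
    by (simp add: algebra_simps)
  moreover have "y * c1 > 0" using assms by simp
  hence "r > 0" using assms by linarith
  hence "(y-x)*(r*c2+c1) > 0" using assms by (intro mult_pos_pos) (auto intro: add_pos_pos)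
  ultimately have "(r - y*c1)*(1+x*c2) < (r - x*c1)*(1+y*c2)" by linarith
  thus ?thesis using dx by (simp add: field_simps)
qed

theorem lemma1:
  fixes K G m0 Ag Bg fc ft ptr rtr :: real
    and phat rhat :: "real \<Rightarrow> real"
  assumes "K > 0" "G > 0" "m0 > 0" "Ag > 0" "Bg > 0" "fc > 0" "ft > 0"
    and "rtr \<ge> 0"
    and phat_def: "\<And>\<gamma>. phat \<gamma> = (THE p. p + \<gamma> * K * mg' Ag Bg fc ft p / fc - ptr = 0)"
    and rhat_def: "\<And>\<gamma>. rhat \<gamma> = (THE \<rho>. \<rho> - max 0 (rtr - \<gamma> * 2 * G *
                        (3 * \<rho> / fc\<^sup>2 + m0 / (sqrt 6 * fc))) = 0)"
  shows "(\<forall>\<gamma>\<ge>0. \<exists>!p. p + \<gamma> * K * mg' Ag Bg fc ft p / fc - ptr = 0)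
       \<and> (\<forall>\<gamma>\<ge>0. \<exists>!\<rho>. \<rho> - max 0 (rtr - \<gamma> * 2 * G *
                        (3 * \<rho> / fc\<^sup>2 + m0 / (sqrt 6 * fc))) = 0)
       \<and> smooth_on {0..} phat
       \<and> strict_antimono_on {0..} phat
       \<and> strict_antimono_on {0..<sqrt 6 * fc * rtr / (2 * G * m0)} rhat
       \<and> (\<forall>\<gamma>\<ge>0. rhat \<gamma> = 1 / (1 + \<gamma> * 6 * G / fc\<^sup>2) *
                        max 0 (rtr - \<gamma> * 2 * G * m0 / (sqrt 6 * fc)))"
proof -
  define c where "c = K / fc"
  define \<beta> where "\<beta> = Bg * fc"
  define a where "a = ft / 3"
  have cpos: "c > 0" unfolding c_def using assms by simp
  have bet: "\<beta> > 0" unfolding \<beta>_def using assms by simp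
  interpret P: pp Ag \<beta> a c ptr using assms cpos bet by unfold_locales auto
  have mg: "\<gamma> * K * mg' Ag Bg fc ft p / fc = \<gamma> * c * P.MM p" for \<gamma> p
    unfolding mg'_def P.MM_def by (simp add: c_def \<beta>_def a_def)
  have eqv: "(p + \<gamma> * K * mg' Ag Bg fc ft p / fc - ptr = 0) \<longleftrightarrow> (p < ptr + \<beta> \<and> P.Gm p = \<gamma>)"
    if "\<gamma> \<ge> 0" for \<gamma> p
    unfolding mg using P.eq_iff[OF that] .
  have gib: "\<gamma> > P.Gm (ptr + \<beta>/2)" if "\<gamma> \<ge> 0" for \<gamma>
    using P.Gm_half_neg that by linarith
  have ex1: "\<exists>!p. p + \<gamma> * K * mg' Ag Bg fc ft p / fc - ptr = 0" if "\<gamma> \<ge> 0" for \<gamma>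
  proof (rule ex1I[of _ "P.gi \<gamma>"])
    show "P.gi \<gamma> + \<gamma> * K * mg' Ag Bg fc ft (P.gi \<gamma>) / fc - ptr = 0"
      using eqv[OF that] P.gi[OF gib[OF that]] by simp
    fix p assume "p + \<gamma> * K * mg' Ag Bg fc ft p / fc - ptr = 0"
    thus "p = P.gi \<gamma>" using eqv[OF that] P.gi_eq by metis
  qed
  have ph: "phat \<gamma> = P.gi \<gamma>" if "\<gamma> \<ge> 0" for \<gamma>
    unfolding phat_def
    by (rule the1_equality[OF ex1[OF that]]) (use eqv[OF that] P.gi[OF gib[OF that]] in simp)
  have part4: "strict_antimono_on {0..} phat"
    unfolding monotone_on_def
  proof (intro ballI impI)
    fix x y :: real assume "x \<in> {0..}" "y \<in> {0..}" and h: "x < y"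
    hence x: "x \<ge> 0" and y: "y \<ge> 0" by auto
    have gx: "P.gi x < ptr + \<beta>" "P.Gm (P.gi x) = x" using P.gi[OF gib[OF x]] by auto
    have gy: "P.gi y < ptr + \<beta>" "P.Gm (P.gi y) = y" using P.gi[OF gib[OF y]] by auto
    have "P.gi y < P.gi x"
    proof (rule ccontr)
      assume "\<not> P.gi y < P.gi x"
      hence "P.gi x < P.gi y \<or> P.gi x = P.gi y" by auto
      thus False
      proof
        assume "P.gi x < P.gi y"
        hence "P.Gm (P.gi y) < P.Gm (P.gi x)" using P.Gm_strict gy by blast
        thus False using gx gy h by simp
      next
        assume "P.gi x = P.gi y" thus False using gx gy h by simp
      qed
    qed
    thus "phat y < phat x" using ph x y by simp
  qed
  have part3: "smooth_on {0..} phat"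
    unfolding smooth_on_def
  proof (intro exI[of _ "\<lambda>n \<gamma>. Re (P.Psi n (of_real (phat \<gamma>)))"] conjI allI ballI)
    show "(\<lambda>\<gamma>. Re (P.Psi 0 (of_real (phat \<gamma>)))) = phat" by simp
    fix n and \<gamma> :: real assume "\<gamma> \<in> {0..}"
    hence g0: "\<gamma> \<ge> 0" by simp
    let ?p = "phat \<gamma>"
    have pl: "?p < ptr + \<beta>" using ph[OF g0] P.gi[OF gib[OF g0]] by simp
    have d1: "(phat has_real_derivative P.Phi ?p) (at \<gamma> within {0..})"
    proof (rule has_field_derivative_transform_within[where f = P.gi and d = 1])
      show "(P.gi has_real_derivative P.Phi ?p) (at \<gamma> within {0..})"
        using P.gi_deriv[OF gib[OF g0]] ph[OF g0] by (simp add: has_field_derivative_at_within)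
    qed (use g0 ph in auto)
    have o: "open {z. Re z < ptr + \<beta>}" by (simp add: open_halfspace_Re_lt)
    have "(P.Psi n has_field_derivative deriv (P.Psi n) (of_real ?p)) (at (of_real ?p))"
      by (rule holomorphic_derivI[OF P.Psi_hol o]) (use pl in simp)
    hence "((\<lambda>x. P.Psi n (of_real x)) has_vector_derivative deriv (P.Psi n) (of_real ?p)) (at ?p)"
      by (rule has_vector_derivative_real_field)
    hence d2: "((\<lambda>x. Re (P.Psi n (of_real x))) has_real_derivative Re (deriv (P.Psi n) (of_real ?p))) (at ?p)"
      by (rule has_field_derivative_Re)
    have "((\<lambda>\<gamma>. Re (P.Psi n (of_real (phat \<gamma>)))) has_real_derivative
        Re (deriv (P.Psi n) (of_real ?p)) * P.Phi ?p) (at \<gamma> within {0..})"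
      using DERIV_chain2[OF d2 d1] .
    moreover have "Re (deriv (P.Psi n) (of_real ?p)) * P.Phi ?p = Re (P.Psi (Suc n) (of_real ?p))"
      by (simp add: P.Phc_real)
    ultimately show "((\<lambda>\<gamma>. Re (P.Psi n (of_real (phat \<gamma>)))) has_real_derivative
        (\<lambda>\<gamma>. Re (P.Psi (Suc n) (of_real (phat \<gamma>)))) \<gamma>) (at \<gamma> within {0..})" by simp
  qed
  define c1 where "c1 = 2 * G * m0 / (sqrt 6 * fc)"
  define c2 where "c2 = 6 * G / fc\<^sup>2"
  have c1: "c1 > 0" unfolding c1_def using assms by simp
  have c2: "c2 > 0" unfolding c2_def using assms by simp
  have rexp: "rtr - \<gamma> * 2 * G * (3 * \<rho> / fc\<^sup>2 + m0 / (sqrt 6 * fc)) = rtr - \<gamma>*c1 - \<gamma>*c2*\<rho>"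
    for \<gamma> \<rho> unfolding c1_def c2_def by (simp add: algebra_simps)
  have rsol: "(\<rho> - max 0 (rtr - \<gamma> * 2 * G * (3 * \<rho> / fc\<^sup>2 + m0 / (sqrt 6 * fc))) = 0)
     \<longleftrightarrow> \<rho> = max 0 (rtr - \<gamma>*c1) / (1 + \<gamma>*c2)" if "\<gamma> \<ge> 0" for \<gamma> \<rho>
    unfolding rexp using rho_sol[OF that c1 c2] .
  have ex2: "\<exists>!\<rho>. \<rho> - max 0 (rtr - \<gamma> * 2 * G * (3 * \<rho> / fc\<^sup>2 + m0 / (sqrt 6 * fc))) = 0"
    if "\<gamma> \<ge> 0" for \<gamma> unfolding rsol[OF that] by simp
  have rh: "rhat \<gamma> = max 0 (rtr - \<gamma>*c1) / (1 + \<gamma>*c2)" if "\<gamma> \<ge> 0" for \<gamma>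
    unfolding rhat_def
    using the1_equality[OF ex2[OF that] rsol[OF that, of "max 0 (rtr - \<gamma>*c1) / (1 + \<gamma>*c2)", THEN iffD2, OF refl]] .
  have part6: "\<forall>\<gamma>\<ge>0. rhat \<gamma> = 1 / (1 + \<gamma> * 6 * G / fc\<^sup>2) *
                        max 0 (rtr - \<gamma> * 2 * G * m0 / (sqrt 6 * fc))"
    using rh unfolding c1_def c2_def by (simp add: mult.assoc)
  have bnd: "sqrt 6 * fc * rtr / (2 * G * m0) = rtr / c1"
    unfolding c1_def using assms by (simp add: field_simps)
  have part5: "strict_antimono_on {0..<sqrt 6 * fc * rtr / (2 * G * m0)} rhat"
    unfolding monotone_on_def bnd
  proof (intro ballI impI)
    fix x y :: real assume xy: "x \<in> {0..<rtr/c1}" "y \<in> {0..<rtr/c1}" and hl: "x < y"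
    hence x: "x \<ge> 0" and y: "y \<ge> 0" and h: "x < y" "y < rtr/c1" by auto
    have yc: "rtr - y * c1 > 0" using h c1 by (simp add: field_simps)
    have "x * c1 < y * c1" using h c1 by simp
    hence xc: "rtr - x * c1 > 0" using yc by linarith
    show "rhat y < rhat x"
      unfolding rh[OF x] rh[OF y] using yc xc rho_decr[OF x _ c1 c2 yc] h by simp
  qed
  show ?thesis using ex1 ex2 part3 part4 part5 part6 by blast
qed

end
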